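(* Let $\mathfrak g$ be a real nilpotent Lie algebra with a metric $\langle,\rangle$ satisfying $\operatorname{Ric}=\lambda\,\mathrm{id}$ with $\lambda\neq0$, and let $\psi$ be a derivation of $\mathfrak g$, self-adjoint with respect to $\langle,\rangle$, with $\operatorname{Tr}\psi^2\neq0$. Let $\tilde{\mathfrak g}=\mathfrak g\rtimes_\psi\operatorname{Span}\{e_0\}$ be the semidirect product with $[e_0,v]=\psi(v)$ for $v\in\mathfrak g$, and let $\widetilde{\langle,\rangle}=\langle,\rangle-\frac1\lambda(\operatorname{Tr}\psi^2)\,e^0\otimes e^0$, where $e^0$ vanishes on $\mathfrak g$ and $e^0(e_0)=1$. Then $\widetilde{\langle,\rangle}$ satisfies $\widetilde{\operatorname{Ric}}=\lambda\,\mathrm{id}$ and $\tilde{\mathfrak g}=\mathfrak g\oplus^\perp\operatorname{Span}\{e_0\}$ is a pseudo-Iwasawa decomposition.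
   Context: A metric on a Lie algebra is a nondegenerate symmetric bilinear form, possibly indefinite; Ricci operators are those of the corresponding left-invariant pseudo-Riemannian metrics on simply connected Lie groups. A pseudo-Iwasawa decomposition of a metric Lie algebra $\tilde{\mathfrak g}$ is an orthogonal direct sum of vector spaces $\tilde{\mathfrak g}=\mathfrak g\oplus^\perp\mathfrak a$ with $\mathfrak g$ a nilpotent ideal, $\mathfrak a$ an abelian subalgebra, and $\operatorname{ad}X$ self-adjoint for every $X\in\mathfrak a$. *)

theory Defs
  imports "HOL-Analysis.Analysis"
begin

text \<open>Finite-dimensional real vector spaces are modelled by types of class euclidean_space.
  A Lie bracket is a function br; a metric is a bilinear form G.\<close>

definition lie_algebra :: "('a::euclidean_space \<Rightarrow> 'a \<Rightarrow> 'a) \<Rightarrow> bool" where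
  "lie_algebra br \<longleftrightarrow> bilinear br \<and> (\<forall>x. br x x = 0) \<and>
     (\<forall>x y z. br x (br y z) + br y (br z x) + br z (br x y) = 0)"

text \<open>Metric: nondegenerate symmetric bilinear form, possibly indefinite.\<close>
definition metric :: "('a::euclidean_space \<Rightarrow> 'a \<Rightarrow> real) \<Rightarrow> bool" where
  "metric G \<longleftrightarrow> bilinear G \<and> (\<forall>x y. G x y = G y x) \<and> (\<forall>x. (\<forall>y. G x y = 0) \<longrightarrow> x = 0)"

definition trace :: "('a::euclidean_space \<Rightarrow> 'a) \<Rightarrow> real" where
  "trace f = (\<Sum>b\<in>Basis. f b \<bullet> b)"

fun lcs :: "('a::real_vector \<Rightarrow> 'a \<Rightarrow> 'a) \<Rightarrow> 'a set \<Rightarrow> nat \<Rightarrow> 'a set" where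
  "lcs br N 0 = N"
| "lcs br N (Suc k) = span {br x y | x y. x \<in> N \<and> y \<in> lcs br N k}"

definition nilpotent_on :: "('a::real_vector \<Rightarrow> 'a \<Rightarrow> 'a) \<Rightarrow> 'a set \<Rightarrow> bool" where
  "nilpotent_on br N \<longleftrightarrow> (\<exists>k. lcs br N k = {0})"

abbreviation nilpotent_lie :: "('a::real_vector \<Rightarrow> 'a \<Rightarrow> 'a) \<Rightarrow> bool" where
  "nilpotent_lie br \<equiv> nilpotent_on br UNIV"

definition derivation :: "('a::euclidean_space \<Rightarrow> 'a \<Rightarrow> 'a) \<Rightarrow> ('a \<Rightarrow> 'a) \<Rightarrow> bool" where
  "derivation br D \<longleftrightarrow> linear D \<and> (\<forall>x y. D (br x y) = br (D x) y + br x (D y))"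

definition self_adjoint :: "('a \<Rightarrow> 'a \<Rightarrow> real) \<Rightarrow> ('a \<Rightarrow> 'a) \<Rightarrow> bool" where
  "self_adjoint G f \<longleftrightarrow> (\<forall>x y. G (f x) y = G x (f y))"

text \<open>Levi-Civita connection of the left-invariant metric (Koszul formula).\<close>
definition levi_civita :: "('a::euclidean_space \<Rightarrow> 'a \<Rightarrow> 'a) \<Rightarrow> ('a \<Rightarrow> 'a \<Rightarrow> real) \<Rightarrow> 'a \<Rightarrow> 'a \<Rightarrow> 'a" where
  "levi_civita br G X Y = (THE W. \<forall>Z. 2 * G W Z = G (br X Y) Z - G (br Y Z) X + G (br Z X) Y)"

definition curvature :: "('a::euclidean_space \<Rightarrow> 'a \<Rightarrow> 'a) \<Rightarrow> ('a \<Rightarrow> 'a \<Rightarrow> real) \<Rightarrow> 'a \<Rightarrow> 'a \<Rightarrow> 'a \<Rightarrow> 'a" where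
  "curvature br G X Y Z = levi_civita br G X (levi_civita br G Y Z)
      - levi_civita br G Y (levi_civita br G X Z) - levi_civita br G (br X Y) Z"

definition ricci_tensor :: "('a::euclidean_space \<Rightarrow> 'a \<Rightarrow> 'a) \<Rightarrow> ('a \<Rightarrow> 'a \<Rightarrow> real) \<Rightarrow> 'a \<Rightarrow> 'a \<Rightarrow> real" where
  "ricci_tensor br G Y Z = trace (\<lambda>X. curvature br G X Y Z)"

definition ricci_op :: "('a::euclidean_space \<Rightarrow> 'a \<Rightarrow> 'a) \<Rightarrow> ('a \<Rightarrow> 'a \<Rightarrow> real) \<Rightarrow> 'a \<Rightarrow> 'a" where
  "ricci_op br G = (THE R. \<forall>X Y. G (R X) Y = ricci_tensor br G X Y)"

text \<open>Semidirect product g \<rtimes>_psi Span{e0}, modelled on 'a \<times> real with e0 = (0,1).\<close>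
definition sd_bracket :: "('a::real_vector \<Rightarrow> 'a \<Rightarrow> 'a) \<Rightarrow> ('a \<Rightarrow> 'a) \<Rightarrow> 'a \<times> real \<Rightarrow> 'a \<times> real \<Rightarrow> 'a \<times> real" where
  "sd_bracket br psi p q = (br (fst p) (fst q) + snd p *\<^sub>R psi (fst q) - snd q *\<^sub>R psi (fst p), 0)"

definition e0 :: "'a::real_vector \<times> real" where "e0 = (0, 1)"

text \<open>The metric <,> - (1/lambda)(Tr psi^2) e^0 \<otimes> e^0, with <,> extended by zero on e0.\<close>
definition sd_metric :: "('a \<Rightarrow> 'a \<Rightarrow> real) \<Rightarrow> real \<Rightarrow> 'a \<times> real \<Rightarrow> 'a \<times> real \<Rightarrow> real" where
  "sd_metric G c p q = G (fst p) (fst q) - c * snd p * snd q"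

definition pseudo_iwasawa ::
  "('b::euclidean_space \<Rightarrow> 'b \<Rightarrow> 'b) \<Rightarrow> ('b \<Rightarrow> 'b \<Rightarrow> real) \<Rightarrow> 'b set \<Rightarrow> 'b set \<Rightarrow> bool" where
  "pseudo_iwasawa br G N A \<longleftrightarrow>
     subspace N \<and> subspace A \<and> N \<inter> A = {0} \<and> N + A = UNIV \<and>
     (\<forall>n\<in>N. \<forall>a\<in>A. G n a = 0) \<and>
     (\<forall>x. \<forall>y\<in>N. br x y \<in> N) \<and> nilpotent_on br N \<and>
     (\<forall>a\<in>A. \<forall>b\<in>A. br a b = 0) \<and>
     (\<forall>a\<in>A. self_adjoint G (br a))"

end

theory Submission
  imports Defs
begin


lemma trace_add: "trace (\<lambda>x. f x + g x) = trace f + trace g"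
  by (simp add: trace_def inner_add_left sum.distrib)
lemma trace_diff: "trace (\<lambda>x. f x - g x) = trace f - trace g"
  by (simp add: trace_def inner_diff_left sum_subtractf)
lemma trace_scale: "trace (\<lambda>x. r *\<^sub>R f x) = r * trace f"
  by (simp add: trace_def sum_distrib_left)
lemma trace_neg: "trace (\<lambda>x. - f x) = - trace f"
  by (simp add: trace_def sum_negf)
lemma trace_zero: "trace (\<lambda>x. 0) = 0"
  by (simp add: trace_def)
lemma trace_rank1:
  assumes "linear l" shows "trace (\<lambda>x. l x *\<^sub>R w) = l w"
proof -
  have "l w = l (\<Sum>b\<in>Basis. (w \<bullet> b) *\<^sub>R b)" by (simp add: euclidean_representation)
  also have "\<dots> = (\<Sum>b\<in>Basis. (w \<bullet> b) * l b)"
    using assms by (simp add: linear_sum linear_scale)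
  finally show ?thesis by (simp add: trace_def mult.commute)
qed

locale mla =
  fixes br :: "'a::euclidean_space \<Rightarrow> 'a \<Rightarrow> 'a" and G :: "'a \<Rightarrow> 'a \<Rightarrow> real"
  assumes lie: "lie_algebra br" and met: "metric G"
begin

lemma brB: "bilinear br" using lie by (simp add: lie_algebra_def)
lemma br_self[simp]: "br x x = 0" using lie by (simp add: lie_algebra_def)
lemma jacobi: "br x (br y z) + br y (br z x) + br z (br x y) = 0"
  using lie by (simp add: lie_algebra_def)
lemma GB: "bilinear G" using met by (simp add: metric_def)
lemma Gsym: "G x y = G y x" using met by (simp add: metric_def)
lemma Gnd: "(\<And>y. G x y = 0) \<Longrightarrow> x = 0" using met by (simp add: metric_def)

lemmas br_simps[simp] = bilinear_ladd[OF brB] bilinear_radd[OF brB] bilinear_lmul[OF brB]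
  bilinear_rmul[OF brB] bilinear_lneg[OF brB] bilinear_rneg[OF brB] bilinear_lzero[OF brB]
  bilinear_rzero[OF brB] bilinear_lsub[OF brB] bilinear_rsub[OF brB]
lemmas G_simps[simp] = bilinear_ladd[OF GB] bilinear_radd[OF GB] bilinear_lmul[OF GB]
  bilinear_rmul[OF GB] bilinear_lneg[OF GB] bilinear_rneg[OF GB] bilinear_lzero[OF GB]
  bilinear_rzero[OF GB] bilinear_lsub[OF GB] bilinear_rsub[OF GB]

lemma br_anti: "br y x = - br x y"
proof -
  have "br (x+y) (x+y) = br x y + br y x" by (simp del: br_self) simp
  then have "br x y + br y x = 0" by simp
  then show ?thesis by (metis add.commute eq_neg_iff_add_eq_0)
qed

lemma linG1: "linear (\<lambda>x. G x y)" using GB by (simp add: bilinear_def)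
lemma linG2: "linear (\<lambda>y. G x y)" using GB by (simp add: bilinear_def)
lemma linbr1: "linear (\<lambda>x. br x y)" using brB by (simp add: bilinear_def)
lemma linbr2: "linear (\<lambda>y. br x y)" using brB by (simp add: bilinear_def)

lemma G_sum_left: "G (\<Sum>i\<in>I. f i) y = (\<Sum>i\<in>I. G (f i) y)"
  using linear_sum[OF linG1, of f I y] by (simp add: o_def)
lemma G_sum_right: "G y (\<Sum>i\<in>I. f i) = (\<Sum>i\<in>I. G y (f i))"
  using linear_sum[OF linG2, of y f I] by (simp add: o_def)

lemma G_eqI: "(\<And>z. G u z = G v z) \<Longrightarrow> u = v"
  using Gnd[of "u - v"] by simp

definition Phi :: "'a \<Rightarrow> 'a" where "Phi w = (\<Sum>b\<in>Basis. G b w *\<^sub>R b)"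

lemma inner_Phi: "x \<bullet> Phi w = G x w"
proof -
  have "G x w = G (\<Sum>b\<in>Basis. (x \<bullet> b) *\<^sub>R b) w" by (simp add: euclidean_representation)
  also have "\<dots> = (\<Sum>b\<in>Basis. (x \<bullet> b) * G b w)" by (simp add: G_sum_left)
  finally show ?thesis by (simp add: Phi_def inner_sum_right mult.commute)
qed

lemma Phi_linear: "linear Phi"
  unfolding Phi_def by (rule linearI) (simp_all add: scaleR_add_left sum.distrib scaleR_sum_right)

lemma Phi_inj: "inj Phi"
proof (rule injI)
  fix u v assume "Phi u = Phi v"
  then have "G x u = G x v" for x by (metis inner_Phi)
  then show "u = v" by (intro G_eqI) (simp add: Gsym)
qed

lemma Phi_surj: "surj Phi"
  using Phi_linear Phi_inj by (simp add: linear_injective_imp_surjective)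

lemma repr: assumes "linear l" shows "\<exists>w. \<forall>x. G x w = l x"
proof -
  define a where "a = (\<Sum>b\<in>Basis. l b *\<^sub>R b)"
  have la: "l x = x \<bullet> a" for x
  proof -
    have "l x = l (\<Sum>b\<in>Basis. (x \<bullet> b) *\<^sub>R b)" by (simp add: euclidean_representation)
    also have "\<dots> = (\<Sum>b\<in>Basis. (x \<bullet> b) * l b)" using assms by (simp add: linear_sum linear_scale)
    finally show ?thesis by (simp add: a_def inner_sum_right mult.commute)
  qed
  obtain w where "Phi w = a" using Phi_surj by (metis surjD)
  then show ?thesis using la inner_Phi by metis
qed

definition fd :: "'a \<Rightarrow> 'a" where "fd b = (SOME w. \<forall>x. G x w = x \<bullet> b)"

lemma G_fd[simp]: "G x (fd b) = x \<bullet> b"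
proof -
  have "\<exists>w. \<forall>x. G x w = x \<bullet> b" by (rule repr) (rule linearI, simp_all add: inner_add_left)
  then show ?thesis unfolding fd_def by (rule someI_ex[where P="\<lambda>w. \<forall>x. G x w = x \<bullet> b", THEN spec])
qed
lemma G_fd'[simp]: "G (fd b) x = x \<bullet> b" by (simp add: Gsym[of "fd b"])

lemma expand1: "x = (\<Sum>b\<in>Basis. G x (fd b) *\<^sub>R b)"
  by (simp add: euclidean_representation)
lemma expand2: "x = (\<Sum>b\<in>Basis. G x b *\<^sub>R fd b)"
proof (rule G_eqI)
  fix z
  have "G x z = G x (\<Sum>b\<in>Basis. (z \<bullet> b) *\<^sub>R b)" by (simp add: euclidean_representation)
  then show "G x z = G (\<Sum>b\<in>Basis. G x b *\<^sub>R fd b) z"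
    by (simp add: G_sum_left G_sum_right mult.commute)
qed

lemma trace_G: "trace A = (\<Sum>b\<in>Basis. G (A b) (fd b))"
  by (simp add: trace_def)

lemma contract1: assumes "linear l" shows "(\<Sum>b\<in>Basis. G u (fd b) * l b) = l u"
proof -
  have "l u = l (\<Sum>b\<in>Basis. G u (fd b) *\<^sub>R b)" using expand1[of u] by simp
  then show ?thesis using assms by (simp add: linear_sum linear_scale)
qed
lemma contract2: assumes "linear l" shows "(\<Sum>b\<in>Basis. G u b * l (fd b)) = l u"
proof -
  have "l u = l (\<Sum>b\<in>Basis. G u b *\<^sub>R fd b)" using expand2[of u] by simp
  then show ?thesis using assms by (simp add: linear_sum linear_scale)
qed

lemma swap_prod: fixes l1 l2 :: "'a \<Rightarrow> real" assumes "linear l1" "linear l2"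
  shows "(\<Sum>b\<in>Basis. l1 b * l2 (fd b)) = (\<Sum>b\<in>Basis. l1 (fd b) * l2 b)"
proof -
  obtain r where r: "\<And>x. G x r = l1 x" using repr[OF assms(1)] by blast
  have "(\<Sum>b\<in>Basis. l1 b * l2 (fd b)) = (\<Sum>b\<in>Basis. G r b * l2 (fd b))"
    by (simp add: r[symmetric] Gsym)
  also have "\<dots> = l2 r" by (rule contract2[OF assms(2)])
  also have "\<dots> = (\<Sum>b\<in>Basis. G r (fd b) * l2 b)" by (rule contract1[OF assms(2), symmetric])
  also have "\<dots> = (\<Sum>b\<in>Basis. l1 (fd b) * l2 b)" by (simp add: r[symmetric] Gsym)
  finally show ?thesis .
qed

lemma swap_bil: fixes phi :: "'a \<Rightarrow> 'a \<Rightarrow> real" assumes "bilinear phi"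
  shows "(\<Sum>b\<in>Basis. phi b (fd b)) = (\<Sum>b\<in>Basis. phi (fd b) b)"
proof -
  have l1: "linear (\<lambda>x. phi x y)" for y using assms by (simp add: bilinear_def)
  have l2: "linear (\<lambda>y. phi x y)" for x using assms by (simp add: bilinear_def)
  have e1: "phi b (fd b) = (\<Sum>c\<in>Basis. G (fd b) (fd c) * phi b c)" for b
    using contract1[OF l2, of "fd b" b] by simp
  have e2: "phi (fd b) b = (\<Sum>c\<in>Basis. G (fd b) (fd c) * phi c b)" for b
    using contract1[OF l1, of "fd b" b] by simp
  have "(\<Sum>b\<in>Basis. \<Sum>c\<in>Basis. G (fd b) (fd c) * phi c b)
      = (\<Sum>c\<in>Basis. \<Sum>b\<in>Basis. G (fd b) (fd c) * phi c b)" by (rule sum.swap)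
  also have "\<dots> = (\<Sum>b\<in>Basis. \<Sum>c\<in>Basis. G (fd b) (fd c) * phi b c)"
    by (simp add: Gsym)
  finally show ?thesis by (simp add: e1 e2)
qed

lemma trace_comp: fixes A B :: "'a \<Rightarrow> 'a" assumes "linear A"
  shows "trace (A \<circ> B) = (\<Sum>a\<in>Basis. \<Sum>c\<in>Basis. G (B a) (fd c) * G (A c) (fd a))"
proof -
  have "A (B a) = (\<Sum>c\<in>Basis. G (B a) (fd c) *\<^sub>R A c)" for a
    using expand1[of "B a"] assms by (metis (no_types, lifting) linear_scale linear_sum sum.cong)
  then show ?thesis by (simp add: trace_G G_sum_left inner_sum_left)
qed

lemma trace_cyclic: fixes A B :: "'a \<Rightarrow> 'a" assumes "linear A" "linear B"
  shows "trace (A \<circ> B) = trace (B \<circ> A)"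
  unfolding trace_comp[OF assms(1)] trace_comp[OF assms(2)]
  by (subst sum.swap) (simp add: mult.commute)

end

context mla begin

definition T :: "'a \<Rightarrow> 'a \<Rightarrow> 'a \<Rightarrow> real" where "T x y w = G (br x y) w"
definition K :: "'a \<Rightarrow> 'a \<Rightarrow> 'a \<Rightarrow> real" where "K x y w = T x y w - T y w x + T w x y"
abbreviation lc where "lc \<equiv> levi_civita br G"

lemma T_anti: "T x y w = - T y x w"
  unfolding T_def by (subst br_anti) simp

lemma linT1[simp]: "linear (\<lambda>u. T u v w)"
  unfolding T_def by (rule linearI) simp_all
lemma linT2[simp]: "linear (\<lambda>v. T u v w)"
  unfolding T_def by (rule linearI) simp_all
lemma linT3[simp]: "linear (\<lambda>w. T u v w)"
  unfolding T_def by (rule linearI) simp_all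

lemma lc_char: "G (lc x y) z = K x y z / 2"
proof -
  have lin: "linear (\<lambda>z. K x y z / 2)"
    unfolding K_def T_def by (rule linearI) (simp_all add: field_simps)
  obtain w where w: "\<And>z. G z w = K x y z / 2" using repr[OF lin] by blast
  have w2: "2 * G w Z = K x y Z" for Z using w[of Z] by (simp add: Gsym[of w])
  have P: "\<forall>Z. 2 * G w Z = G (br x y) Z - G (br y Z) x + G (br Z x) y"
    using w2 by (simp add: K_def T_def)
  have "lc x y = w"
    unfolding levi_civita_def
  proof (rule the_equality)
    show "\<forall>Z. 2 * G w Z = G (br x y) Z - G (br y Z) x + G (br Z x) y" by (rule P)
  next
    fix W assume "\<forall>Z. 2 * G W Z = G (br x y) Z - G (br y Z) x + G (br Z x) y"
    with P show "W = w" by (intro G_eqI) (metis mult_cancel_left zero_neq_numeral)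
  qed
  then show ?thesis using w by (simp add: Gsym[of w])
qed

lemma lc_lin2: "linear (lc x)"
proof (rule linearI)
  show "lc x (u + v) = lc x u + lc x v" for u v
    by (rule G_eqI) (simp add: lc_char K_def T_def field_simps)
  show "lc x (r *\<^sub>R u) = r *\<^sub>R lc x u" for r u
    by (rule G_eqI) (simp add: lc_char K_def T_def field_simps)
qed
lemma lc_lin1: "linear (\<lambda>x. lc x y)"
proof (rule linearI)
  show "lc (u + v) y = lc u y + lc v y" for u v
    by (rule G_eqI) (simp add: lc_char K_def T_def field_simps)
  show "lc (r *\<^sub>R u) y = r *\<^sub>R lc u y" for r u
    by (rule G_eqI) (simp add: lc_char K_def T_def field_simps)
qed

lemma K_skew: "K y u v + K y v u = 0"
  by (simp add: K_def T_anti[of u v] T_anti[of y u] T_anti[of v y])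
lemma lc_skew: "G (lc y u) v = - G u (lc y v)"
  using K_skew[of y u v] by (simp add: lc_char Gsym[of u])

lemma lc_torsion: "lc x z - lc z x = br x z"
proof (rule G_eqI)
  fix w show "G (lc x z - lc z x) w = G (br x z) w"
    using br_anti[of w x] br_anti[of w z] br_anti[of x z] by (simp add: lc_char K_def T_def field_simps)
qed

lemma swap_in: fixes p q :: "'a \<Rightarrow> 'a \<Rightarrow> real"
  assumes "\<And>a. linear (p a)" "\<And>a. linear (q a)"
  shows "(\<Sum>a\<in>Basis. \<Sum>c\<in>Basis. p a c * q a (fd c)) = (\<Sum>a\<in>Basis. \<Sum>c\<in>Basis. p a (fd c) * q a c)"
  by (rule sum.cong[OF refl]) (rule swap_prod[OF assms])

lemma swap_out: fixes p q :: "'a \<Rightarrow> 'a \<Rightarrow> real"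
  assumes "\<And>c. linear (p c)" "\<And>c. linear (q c)"
  shows "(\<Sum>a\<in>Basis. \<Sum>c\<in>Basis. p c a * q c (fd a)) = (\<Sum>a\<in>Basis. \<Sum>c\<in>Basis. p c (fd a) * q c a)"
proof -
  have "(\<Sum>a\<in>Basis. \<Sum>c\<in>Basis. p c a * q c (fd a)) = (\<Sum>c\<in>Basis. \<Sum>a\<in>Basis. p c a * q c (fd a))"
    by (rule sum.swap)
  also have "\<dots> = (\<Sum>c\<in>Basis. \<Sum>a\<in>Basis. p c (fd a) * q c a)"
    by (rule sum.cong[OF refl]) (rule swap_prod[OF assms])
  also have "\<dots> = (\<Sum>a\<in>Basis. \<Sum>c\<in>Basis. p c (fd a) * q c a)"
    by (rule sum.swap)
  finally show ?thesis .
qed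

definition "XX y z = (\<Sum>a\<in>Basis. \<Sum>c\<in>Basis. T y a c * T z (fd a) (fd c))"
definition "SS y z = (\<Sum>a\<in>Basis. \<Sum>c\<in>Basis. T a c y * T (fd a) (fd c) z)"
definition "UU y z = (\<Sum>a\<in>Basis. \<Sum>c\<in>Basis. T y a c * T (fd a) (fd c) z)"
definition "WW y z = (\<Sum>a\<in>Basis. \<Sum>c\<in>Basis. T y a (fd c) * T z c (fd a))"

lemma WW_trace: "WW y z = trace (br z \<circ> br y)"
  by (simp add: trace_comp[OF linbr2] WW_def T_def)

lemma P11: "(\<Sum>a\<in>Basis. \<Sum>c\<in>Basis. T a z (fd c) * T y c (fd a)) = - WW z y"
  unfolding WW_def by (simp add: sum_negf[symmetric]) (intro sum.cong refl, simp add: T_anti[of _ z])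

end

context mla begin

lemma negsum2: "(\<Sum>a\<in>A. \<Sum>c\<in>B. - f a c) = - (\<Sum>a\<in>A. \<Sum>c\<in>B. f a c :: real)"
  by (simp add: sum_negf)

lemma P12: "(\<Sum>a\<in>Basis. \<Sum>c\<in>Basis. T a z (fd c) * T c (fd a) y) = UU z y"
proof -
  have pw1: "T a z (fd c) * T c (fd a) y = - (T c (fd a) y * T z a (fd c))" for a c
    using T_anti[of a z "fd c"] by simp
  have pw2: "T (fd c) (fd a) y * T z a c = - (T z a c * T (fd a) (fd c) y)" for a c
    using T_anti[of "fd c" "fd a" y] by simp
  have "(\<Sum>a\<in>Basis. \<Sum>c\<in>Basis. T a z (fd c) * T c (fd a) y)
     = - (\<Sum>a\<in>Basis. \<Sum>c\<in>Basis. T c (fd a) y * T z a (fd c))"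
    by (simp only: pw1 negsum2)
  also have "(\<Sum>a\<in>Basis. \<Sum>c\<in>Basis. T c (fd a) y * T z a (fd c))
     = (\<Sum>a\<in>Basis. \<Sum>c\<in>Basis. T (fd c) (fd a) y * T z a c)"
    by (rule swap_in[of "\<lambda>a u. T u (fd a) y" "\<lambda>a v. T z a v", simplified])
  also have "\<dots> = - UU z y"
    unfolding UU_def by (simp only: pw2 negsum2)
  finally show ?thesis by simp
qed

lemma P13: "(\<Sum>a\<in>Basis. \<Sum>c\<in>Basis. T a z (fd c) * T (fd a) y c) = XX z y"
proof -
  have pw: "T a z (fd c) * T (fd a) y c = T y (fd a) c * T z a (fd c)" for a c
    using T_anti[of a z "fd c"] T_anti[of "fd a" y c] by simp
  have "(\<Sum>a\<in>Basis. \<Sum>c\<in>Basis. T a z (fd c) * T (fd a) y c)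
     = (\<Sum>a\<in>Basis. \<Sum>c\<in>Basis. T y (fd a) c * T z a (fd c))"
    by (simp only: pw)
  also have "\<dots> = (\<Sum>a\<in>Basis. \<Sum>c\<in>Basis. T y (fd a) (fd c) * T z a c)"
    by (rule swap_in[of "\<lambda>a u. T y (fd a) u" "\<lambda>a v. T z a v", simplified])
  also have "\<dots> = XX z y"
    unfolding XX_def by (simp add: mult.commute)
  finally show ?thesis .
qed

lemma P21: "(\<Sum>a\<in>Basis. \<Sum>c\<in>Basis. T z (fd c) a * T y c (fd a)) = XX y z"
proof -
  have "(\<Sum>a\<in>Basis. \<Sum>c\<in>Basis. T z (fd c) a * T y c (fd a))
     = (\<Sum>a\<in>Basis. \<Sum>c\<in>Basis. T z (fd a) c * T y a (fd c))"
    by (rule sum.swap)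
  also have "\<dots> = (\<Sum>a\<in>Basis. \<Sum>c\<in>Basis. T z (fd a) (fd c) * T y a c)"
    by (rule swap_in[of "\<lambda>a u. T z (fd a) u" "\<lambda>a v. T y a v", simplified])
  also have "\<dots> = XX y z"
    unfolding XX_def by (simp add: mult.commute)
  finally show ?thesis .
qed

lemma P22: "(\<Sum>a\<in>Basis. \<Sum>c\<in>Basis. T z (fd c) a * T c (fd a) y) = UU z y"
proof -
  have "(\<Sum>a\<in>Basis. \<Sum>c\<in>Basis. T z (fd c) a * T c (fd a) y)
     = (\<Sum>a\<in>Basis. \<Sum>c\<in>Basis. T a (fd c) y * T z (fd a) c)"
    by (subst sum.swap) (simp add: mult.commute)
  also have "\<dots> = (\<Sum>a\<in>Basis. \<Sum>c\<in>Basis. T (fd a) (fd c) y * T z a c)"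
    by (rule swap_out[of "\<lambda>c u. T u (fd c) y" "\<lambda>c v. T z v c", simplified])
  also have "\<dots> = UU z y"
    unfolding UU_def by (simp add: mult.commute)
  finally show ?thesis .
qed

lemma P23: "(\<Sum>a\<in>Basis. \<Sum>c\<in>Basis. T z (fd c) a * T (fd a) y c) = - WW z y"
proof -
  have pw: "T z (fd a) c * T (fd c) y a = - (T z (fd a) c * T y (fd c) a)" for a c
    using T_anti[of "fd c" y a] by simp
  have "(\<Sum>a\<in>Basis. \<Sum>c\<in>Basis. T z (fd c) a * T (fd a) y c)
     = (\<Sum>a\<in>Basis. \<Sum>c\<in>Basis. T z (fd a) c * T (fd c) y a)"
    by (rule sum.swap)
  also have "\<dots> = - (\<Sum>a\<in>Basis. \<Sum>c\<in>Basis. T z (fd a) c * T y (fd c) a)"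
    by (simp only: pw negsum2)
  also have "(\<Sum>a\<in>Basis. \<Sum>c\<in>Basis. T z (fd a) c * T y (fd c) a)
      = (\<Sum>a\<in>Basis. \<Sum>c\<in>Basis. T z (fd a) (fd c) * T y c a)"
    by (rule swap_in[of "\<lambda>a u. T z (fd a) u" "\<lambda>a v. T y v a", simplified])
  also have "\<dots> = (\<Sum>a\<in>Basis. \<Sum>c\<in>Basis. T y c a * T z (fd a) (fd c))"
    by (simp add: mult.commute)
  also have "\<dots> = (\<Sum>a\<in>Basis. \<Sum>c\<in>Basis. T y c (fd a) * T z a (fd c))"
    by (rule swap_out[of "\<lambda>c u. T y c u" "\<lambda>c v. T z v (fd c)", simplified])
  also have "\<dots> = WW z y"
    unfolding WW_def by (simp add: mult.commute)
  finally show ?thesis by simp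
qed

lemma P31: "(\<Sum>a\<in>Basis. \<Sum>c\<in>Basis. T (fd c) a z * T y c (fd a)) = UU y z"
proof -
  have pw1: "T (fd c) a z * T y c (fd a) = - (T a (fd c) z * T y c (fd a))" for a c
    using T_anti[of "fd c" a z] by simp
  have pw2: "T (fd c) (fd a) z * T y a c = - (T y a c * T (fd a) (fd c) z)" for a c
    using T_anti[of "fd c" "fd a" z] by simp
  have "(\<Sum>a\<in>Basis. \<Sum>c\<in>Basis. T (fd c) a z * T y c (fd a))
     = - (\<Sum>a\<in>Basis. \<Sum>c\<in>Basis. T a (fd c) z * T y c (fd a))"
    by (simp only: pw1 negsum2)
  also have "(\<Sum>a\<in>Basis. \<Sum>c\<in>Basis. T a (fd c) z * T y c (fd a))
     = (\<Sum>a\<in>Basis. \<Sum>c\<in>Basis. T (fd a) (fd c) z * T y c a)"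
    by (rule swap_out[of "\<lambda>c u. T u (fd c) z" "\<lambda>c v. T y c v", simplified])
  also have "\<dots> = (\<Sum>a\<in>Basis. \<Sum>c\<in>Basis. T (fd c) (fd a) z * T y a c)"
    by (rule sum.swap)
  also have "\<dots> = - UU y z"
    unfolding UU_def by (simp only: pw2 negsum2)
  finally show ?thesis by simp
qed

lemma P32: "(\<Sum>a\<in>Basis. \<Sum>c\<in>Basis. T (fd c) a z * T c (fd a) y) = SS y z"
proof -
  have pw: "T (fd c) (fd a) z * T c a y = T a c y * T (fd a) (fd c) z" for a c
    using T_anti[of "fd c" "fd a" z] T_anti[of c a y] by simp
  have "(\<Sum>a\<in>Basis. \<Sum>c\<in>Basis. T (fd c) a z * T c (fd a) y)
     = (\<Sum>a\<in>Basis. \<Sum>c\<in>Basis. T (fd c) (fd a) z * T c a y)"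
    by (rule swap_out[of "\<lambda>c u. T (fd c) u z" "\<lambda>c v. T c v y", simplified])
  also have "\<dots> = SS y z"
    unfolding SS_def by (simp only: pw)
  finally show ?thesis .
qed

lemma P33: "(\<Sum>a\<in>Basis. \<Sum>c\<in>Basis. T (fd c) a z * T (fd a) y c) = UU y z"
proof -
  have pw: "T (fd c) (fd a) z * T a y c = T y a c * T (fd a) (fd c) z" for a c
    using T_anti[of "fd c" "fd a" z] T_anti[of a y c] by simp
  have "(\<Sum>a\<in>Basis. \<Sum>c\<in>Basis. T (fd c) a z * T (fd a) y c)
     = (\<Sum>a\<in>Basis. \<Sum>c\<in>Basis. T (fd c) (fd a) z * T a y c)"
    by (rule swap_out[of "\<lambda>c u. T (fd c) u z" "\<lambda>c v. T v y c", simplified])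
  also have "\<dots> = UU y z"
    unfolding UU_def by (simp only: pw)
  finally show ?thesis .
qed

lemma N1: "(\<Sum>a\<in>Basis. \<Sum>c\<in>Basis. T y a (fd c) * T c z (fd a)) = - WW y z"
proof -
  have pw: "T y a (fd c) * T c z (fd a) = - (T y a (fd c) * T z c (fd a))" for a c
    using T_anti[of c z "fd a"] by simp
  show ?thesis unfolding WW_def by (simp only: pw negsum2)
qed

lemma N2: "(\<Sum>a\<in>Basis. \<Sum>c\<in>Basis. T y a (fd c) * T z (fd a) c) = XX y z"
proof -
  have "(\<Sum>a\<in>Basis. \<Sum>c\<in>Basis. T y a (fd c) * T z (fd a) c)
     = (\<Sum>a\<in>Basis. \<Sum>c\<in>Basis. T z (fd a) c * T y a (fd c))" by (simp add: mult.commute)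
  also have "\<dots> = (\<Sum>a\<in>Basis. \<Sum>c\<in>Basis. T z (fd a) (fd c) * T y a c)"
    by (rule swap_in[of "\<lambda>a u. T z (fd a) u" "\<lambda>a v. T y a v", simplified])
  also have "\<dots> = XX y z"
    unfolding XX_def by (simp add: mult.commute)
  finally show ?thesis .
qed

lemma N3: "(\<Sum>a\<in>Basis. \<Sum>c\<in>Basis. T y a (fd c) * T (fd a) c z) = UU y z"
proof -
  have "(\<Sum>a\<in>Basis. \<Sum>c\<in>Basis. T y a (fd c) * T (fd a) c z)
     = (\<Sum>a\<in>Basis. \<Sum>c\<in>Basis. T (fd a) c z * T y a (fd c))" by (simp add: mult.commute)
  also have "\<dots> = (\<Sum>a\<in>Basis. \<Sum>c\<in>Basis. T (fd a) (fd c) z * T y a c)"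
    by (rule swap_in[of "\<lambda>a u. T (fd a) u z" "\<lambda>a v. T y a v", simplified])
  also have "\<dots> = UU y z"
    unfolding UU_def by (simp add: mult.commute)
  finally show ?thesis .
qed

end

context mla begin

lemma ric_formula:
  "ricci_tensor br G y z = trace (\<lambda>x. lc x (lc y z)) + SS y z / 4 - (XX y z + XX z y) / 4 - WW y z / 2"
proof -
  have neg: "lc (br x y) z = - lc (br y x) z" for x
    using br_anti[of x y] linear_neg[OF lc_lin1, of "br y x" z] by simp
  have "(\<lambda>x. curvature br G x y z) = (\<lambda>x. (lc x (lc y z) - lc y (lc x z)) + lc (br y x) z)"
    by (rule ext) (simp add: curvature_def neg)
  then have r1: "ricci_tensor br G y z = trace (\<lambda>x. lc x (lc y z)) - trace (lc y \<circ> (\<lambda>x. lc x z))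
     + trace ((\<lambda>x. lc x z) \<circ> br y)"
    by (simp add: ricci_tensor_def trace_add trace_diff o_def)
  have pw1: "(K a z (fd c) / 2) * (K y c (fd a) / 2) =
     (T a z (fd c) * T y c (fd a) - T a z (fd c) * T c (fd a) y + T a z (fd c) * T (fd a) y c
     - T z (fd c) a * T y c (fd a) + T z (fd c) a * T c (fd a) y - T z (fd c) a * T (fd a) y c
     + T (fd c) a z * T y c (fd a) - T (fd c) a z * T c (fd a) y + T (fd c) a z * T (fd a) y c) / 4"
    for a c unfolding K_def by (simp add: algebra_simps)
  have pw2: "T y a (fd c) * (K c z (fd a) / 2) =
     (T y a (fd c) * T c z (fd a) - T y a (fd c) * T z (fd a) c + T y a (fd c) * T (fd a) c z) / 2"
    for a c unfolding K_def by (simp add: algebra_simps)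
  have t1: "trace (lc y \<circ> (\<lambda>x. lc x z)) =
      (- WW z y - UU z y + XX z y - XX y z + UU z y + WW z y + UU y z - SS y z + UU y z) / 4"
    unfolding trace_comp[OF lc_lin2] lc_char
    by (simp only: pw1 sum_divide_distrib[symmetric] sum.distrib sum_subtractf
        P11 P12 P13 P21 P22 P23 P31 P32 P33 diff_minus_eq_add)
  have t2: "trace ((\<lambda>x. lc x z) \<circ> br y) = (- WW y z - XX y z + UU y z) / 2"
    unfolding trace_comp[OF lc_lin1] lc_char T_def[symmetric]
    by (simp only: pw2 sum_divide_distrib[symmetric] sum.distrib sum_subtractf N1 N2 N3)
  show ?thesis unfolding r1 t1 t2 by (simp add: field_simps)
qed

end


lemma trace_comp0: fixes A B :: "'a::euclidean_space \<Rightarrow> 'a" assumes "linear A"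
  shows "trace (A \<circ> B) = (\<Sum>a\<in>Basis. \<Sum>c\<in>Basis. (B a \<bullet> c) * (A c \<bullet> a))"
proof -
  have "A (B a) = (\<Sum>c\<in>Basis. (B a \<bullet> c) *\<^sub>R A c)" for a
  proof -
    have "A (B a) = A (\<Sum>c\<in>Basis. (B a \<bullet> c) *\<^sub>R c)" by (simp add: euclidean_representation)
    then show ?thesis using assms by (simp add: linear_sum linear_scale)
  qed
  then show ?thesis by (simp add: trace_def inner_sum_left)
qed

lemma trace_cyclic0: fixes A B :: "'a::euclidean_space \<Rightarrow> 'a" assumes "linear A" "linear B"
  shows "trace (A \<circ> B) = trace (B \<circ> A)"
  unfolding trace_comp0[OF assms(1)] trace_comp0[OF assms(2)]
  by (subst sum.swap) (simp add: mult.commute)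

lemma proj_exists: fixes V :: "'a::euclidean_space set" assumes "subspace V"
  shows "\<exists>P. linear P \<and> (\<forall>x. P x \<in> V) \<and> (\<forall>v\<in>V. P v = v)"
proof -
  obtain g where "g ` UNIV \<subseteq> V" "linear g" "\<forall>v\<in>V. g (id v) = v"
    using linear_exists_left_inverse_on[of id V] assms by (auto simp: linear_id)
  then show ?thesis by auto
qed

lemma trace_flag:
  fixes A :: "'a::euclidean_space \<Rightarrow> 'a" and V :: "nat \<Rightarrow> 'a set"
  assumes lA: "linear A" and sV: "\<And>k. subspace (V k)" and V0: "V 0 = UNIV" and Vm: "V m = {0}"
    and dec: "\<And>k. V (Suc k) \<subseteq> V k" and AV: "\<And>k x. x \<in> V k \<Longrightarrow> A x \<in> V (Suc k)"
  shows "trace A = 0"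
proof -
  have "\<forall>k. \<exists>P. linear P \<and> (\<forall>x. P x \<in> V k) \<and> (\<forall>v\<in>V k. P v = v)"
    using proj_exists[OF sV] by blast
  then obtain P where lP: "\<And>k. linear (P k)" and PV: "\<And>k x. P k x \<in> V k"
    and Pid: "\<And>k v. v \<in> V k \<Longrightarrow> P k v = v" by metis
  have step: "trace (A \<circ> P k) = trace (A \<circ> P (Suc k))" for k
  proof -
    have e1: "A \<circ> P k = P (Suc k) \<circ> (A \<circ> P k)"
      by (rule ext) (simp add: Pid AV PV)
    have e2: "(A \<circ> P k) \<circ> P (Suc k) = A \<circ> P (Suc k)"
      by (rule ext) (simp add: Pid PV dec[THEN subsetD])
    have "trace (A \<circ> P k) = trace (P (Suc k) \<circ> (A \<circ> P k))" using e1 by simp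
    also have "\<dots> = trace ((A \<circ> P k) \<circ> P (Suc k))"
      by (rule trace_cyclic0) (simp_all add: lP lA linear_compose)
    finally show ?thesis by (simp add: e2)
  qed
  have all: "trace (A \<circ> P 0) = trace (A \<circ> P k)" for k
  proof (induction k)
    case (Suc k) show ?case by (rule trans[OF Suc.IH step])
  qed simp
  have "A \<circ> P 0 = A" by (rule ext) (simp add: Pid V0)
  moreover have "A \<circ> P m = (\<lambda>x. 0)"
    using PV[of m] Vm lA by (auto simp: linear_0)
  ultimately show ?thesis using all[of m] by (simp add: trace_zero)
qed


context mla begin

lemma trL: "trace (\<lambda>x. lc x w) = - trace (br w)"
proof -
  have b1: "bilinear (\<lambda>u v. T w v u)" by (simp add: bilinear_def)
  have b2: "bilinear (\<lambda>u v. T v u w)" by (simp add: bilinear_def)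
  have s1: "(\<Sum>b\<in>Basis. T w (fd b) b) = (\<Sum>b\<in>Basis. T w b (fd b))"
    using swap_bil[OF b1] by simp
  have s2: "(\<Sum>b\<in>Basis. T (fd b) b w) = (\<Sum>b\<in>Basis. T b (fd b) w)"
    using swap_bil[OF b2] by simp
  have s3: "(\<Sum>b\<in>Basis. T b (fd b) w) = - (\<Sum>b\<in>Basis. T (fd b) b w)"
    by (simp add: sum_negf[symmetric] T_anti[of _ "fd _"])
  have z: "(\<Sum>b\<in>Basis. T (fd b) b w) = 0" using s2 s3 by simp
  have s4: "(\<Sum>b\<in>Basis. T b w (fd b)) = - (\<Sum>b\<in>Basis. T w b (fd b))"
    by (simp add: sum_negf[symmetric] T_anti[of _ w])
  have tw: "trace (br w) = (\<Sum>b\<in>Basis. T w b (fd b))" by (simp add: trace_G T_def)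
  have "trace (\<lambda>x. lc x w) = (\<Sum>b\<in>Basis. (T b w (fd b) - T w (fd b) b + T (fd b) b w) / 2)"
    unfolding trace_G lc_char K_def by simp
  also have "\<dots> = ((\<Sum>b\<in>Basis. T b w (fd b)) - (\<Sum>b\<in>Basis. T w (fd b) b) + (\<Sum>b\<in>Basis. T (fd b) b w)) / 2"
    by (simp add: sum_divide_distrib[symmetric] sum.distrib sum_subtractf)
  finally show ?thesis using s1 s4 z tw by simp
qed

lemma contr_D:
  fixes phi :: "'a \<Rightarrow> 'a \<Rightarrow> real"
  assumes bil: "bilinear phi" and lD: "linear D" and sD: "\<And>x y. G (D x) y = G x (D y)"
  shows "(\<Sum>k\<in>Basis. phi (D k) (fd k)) = (\<Sum>k\<in>Basis. phi (fd k) (D k))"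
proof -
  have l1: "linear (\<lambda>x. phi x y)" for y using bil by (simp add: bilinear_def)
  have l2: "linear (\<lambda>y. phi x y)" for x using bil by (simp add: bilinear_def)
  have e1: "phi (D k) (fd k) = (\<Sum>m\<in>Basis. G (D k) (fd m) * phi m (fd k))" for k
    using contract1[OF l1, of "D k" "fd k"] by simp
  have e2: "phi k (D (fd k)) = (\<Sum>m\<in>Basis. G (D (fd k)) m * phi k (fd m))" for k
    using contract2[OF l2, of "D (fd k)" k] by simp
  have "(\<Sum>k\<in>Basis. phi (D k) (fd k)) = (\<Sum>k\<in>Basis. \<Sum>m\<in>Basis. G (D k) (fd m) * phi m (fd k))"
    by (simp add: e1)
  also have "\<dots> = (\<Sum>k\<in>Basis. \<Sum>m\<in>Basis. G (D (fd k)) m * phi k (fd m))"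
    by (subst sum.swap) (simp add: sD Gsym[of "fd _"])
  also have "\<dots> = (\<Sum>k\<in>Basis. phi k (D (fd k)))" by (simp add: e2)
  also have "\<dots> = (\<Sum>k\<in>Basis. phi (fd k) (D k))"
  proof -
    have "bilinear (\<lambda>u v. phi u (D v))"
      using l1 l2 lD by (simp add: bilinear_def linear_compose[unfolded o_def])
    from swap_bil[OF this] show ?thesis by simp
  qed
  finally show ?thesis .
qed

lemma XX_bil: "bilinear XX"
  unfolding bilinear_def XX_def
  by (auto intro!: linearI simp: T_def sum.distrib sum_distrib_left algebra_simps)

end

locale setting = mla br G for br :: "'a::euclidean_space \<Rightarrow> 'a \<Rightarrow> 'a" and G +
  fixes psi :: "'a \<Rightarrow> 'a" and lam :: real
  assumes nilp: "nilpotent_lie br" and ricop: "ricci_op br G = (\<lambda>X. lam *\<^sub>R X)"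
    and lam0: "lam \<noteq> 0" and der: "derivation br psi" and sa: "self_adjoint G psi"
begin

abbreviation "V \<equiv> lcs br UNIV"

lemma psi_lin: "linear psi" using der by (simp add: derivation_def)
lemma psi_der: "psi (br x y) = br (psi x) y + br x (psi y)" using der by (simp add: derivation_def)
lemma psi_sa: "G (psi x) y = G x (psi y)" using sa by (simp add: self_adjoint_def)

lemma V_sub: "subspace (V k)" by (cases k) (simp_all add: subspace_UNIV subspace_span)
lemma V_dec: "V (Suc k) \<subseteq> V k"
proof (induction k)
  case (Suc k) then show ?case by (simp only: lcs.simps) (rule span_mono, blast)
qed simp
lemma V_ad: "x \<in> V k \<Longrightarrow> br w x \<in> V (Suc k)"
  by (simp only: lcs.simps) (rule span_base, blast)
lemma V_ad': assumes "x \<in> V k" shows "br x w \<in> V (Suc k)"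
proof -
  have "- br w x \<in> V (Suc k)" using V_ad[OF assms, of w] by (simp only: lcs.simps) (rule span_neg)
  then show ?thesis by (simp add: br_anti[of w x])
qed
lemma V_psi: "x \<in> V k \<Longrightarrow> psi x \<in> V k"
proof (induction k arbitrary: x)
  case (Suc k)
  let ?S = "{br a b |a b. a \<in> UNIV \<and> b \<in> V k}"
  have "psi ` ?S \<subseteq> span ?S"
  proof
    fix v assume "v \<in> psi ` ?S"
    then obtain a b where v: "v = psi (br a b)" and b: "b \<in> V k" by blast
    have "br (psi a) b \<in> span ?S" using b by (intro span_base) blast
    moreover have "br a (psi b) \<in> span ?S" using Suc.IH[OF b] by (intro span_base) blast
    ultimately show "v \<in> span ?S" by (simp add: v psi_der span_add)
  qed
  then have "span (psi ` ?S) \<subseteq> span ?S" by (simp add: span_minimal subspace_span)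
  moreover have "psi x \<in> span (psi ` ?S)"
  proof -
    have "psi x \<in> psi ` span ?S" using Suc.prems by simp
    then show ?thesis by (simp add: span_linear_image[OF psi_lin])
  qed
  ultimately show ?case by (simp only: lcs.simps) blast
qed simp

lemma nil_m: obtains m where "V m = {0}" using nilp by (auto simp: nilpotent_on_def)

lemma flag: assumes "linear A" "\<And>k x. x \<in> V k \<Longrightarrow> A x \<in> V (Suc k)" shows "trace A = 0"
proof -
  obtain m where "V m = {0}" by (rule nil_m)
  then show ?thesis using trace_flag[of A V m] assms V_sub V_dec by simp
qed

lemma tr_ad: "trace (br w) = 0" by (rule flag[OF linbr2 V_ad])
lemma tr_adad: "trace (br z \<circ> br y) = 0"
proof (rule flag)
  show "linear (br z \<circ> br y)" by (intro linear_compose linbr2)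
  fix k x assume "x \<in> V k"
  then show "(br z \<circ> br y) x \<in> V (Suc k)"
    using V_ad[OF V_ad[of x k y], of z] V_dec[of "Suc k"] by auto
qed
lemma WW0: "WW y z = 0" by (simp add: WW_trace tr_adad)
lemma tr_L: "trace (\<lambda>x. lc x w) = 0" by (simp add: trL tr_ad)

end

context setting begin

lemma curv_lin: "linear (\<lambda>Z. curvature br G x X Z)"
  by (rule linearI) (simp_all add: curvature_def linear_add[OF lc_lin2] linear_scale[OF lc_lin2] algebra_simps)

lemma ric_lin: "linear (\<lambda>Z. ricci_tensor br G X Z)"
proof (rule linearI)
  fix u v
  have "(\<lambda>x. curvature br G x X (u + v)) = (\<lambda>x. curvature br G x X u + curvature br G x X v)"
    by (rule ext) (rule linear_add[OF curv_lin])
  then show "ricci_tensor br G X (u + v) = ricci_tensor br G X u + ricci_tensor br G X v"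
    by (simp add: ricci_tensor_def trace_add)
next
  fix r u
  have "(\<lambda>x. curvature br G x X (r *\<^sub>R u)) = (\<lambda>x. r *\<^sub>R curvature br G x X u)"
    by (rule ext) (rule linear_scale[OF curv_lin])
  then show "ricci_tensor br G X (r *\<^sub>R u) = r *\<^sub>R ricci_tensor br G X u"
    by (simp add: ricci_tensor_def trace_scale)
qed

lemma ric_eq: "ricci_tensor br G X Y = lam * G X Y"
proof -
  let ?P = "\<lambda>R. \<forall>X Y. G (R X) Y = ricci_tensor br G X Y"
  have "\<forall>X. \<exists>w. \<forall>Y. G w Y = ricci_tensor br G X Y"
  proof
    fix X obtain w where "\<And>Y. G Y w = ricci_tensor br G X Y" using repr[OF ric_lin] by blast
    then show "\<exists>w. \<forall>Y. G w Y = ricci_tensor br G X Y" by (metis Gsym)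
  qed
  then obtain R where R: "?P R" by metis
  have "\<exists>!R. ?P R"
  proof (rule ex1I[of _ R])
    show "?P R" by (rule R)
    fix R' assume "?P R'"
    with R show "R' = R" by (intro ext G_eqI) simp
  qed
  then have "?P (ricci_op br G)" unfolding ricci_op_def by (rule theI')
  then show ?thesis by (simp add: ricop)
qed

lemma SS_contr: "(\<Sum>k\<in>Basis. SS (psi k) (fd k)) = 2 * (\<Sum>k\<in>Basis. XX (psi k) (fd k))"
proof -
  have pw: "T a c (psi k) = T (psi a) c k + T a (psi c) k" for a c k
    by (simp add: T_def Gsym[of "br a c"] psi_sa[symmetric] psi_der Gsym[of _ k])
  have pw2: "T a (psi c) k * T (fd a) (fd c) (fd k) = T (psi c) a k * T (fd c) (fd a) (fd k)" for a c k
    using T_anti[of a "psi c" k] T_anti[of "fd a" "fd c" "fd k"] by simp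
  have "(\<Sum>k\<in>Basis. SS (psi k) (fd k)) =
     (\<Sum>k\<in>Basis. \<Sum>a\<in>Basis. \<Sum>c\<in>Basis. T (psi a) c k * T (fd a) (fd c) (fd k))
   + (\<Sum>k\<in>Basis. \<Sum>a\<in>Basis. \<Sum>c\<in>Basis. T a (psi c) k * T (fd a) (fd c) (fd k))"
    unfolding SS_def pw by (simp add: sum.distrib algebra_simps)
  also have "(\<Sum>k\<in>Basis. \<Sum>a\<in>Basis. \<Sum>c\<in>Basis. T (psi a) c k * T (fd a) (fd c) (fd k))
     = (\<Sum>a\<in>Basis. \<Sum>c\<in>Basis. \<Sum>k\<in>Basis. T (psi a) c k * T (fd a) (fd c) (fd k))"
    by (subst sum.swap) (rule sum.cong[OF refl], rule sum.swap)
  also have "\<dots> = (\<Sum>a\<in>Basis. XX (psi a) (fd a))" by (simp add: XX_def)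
  also have "(\<Sum>k\<in>Basis. \<Sum>a\<in>Basis. \<Sum>c\<in>Basis. T a (psi c) k * T (fd a) (fd c) (fd k))
     = (\<Sum>k\<in>Basis. \<Sum>a\<in>Basis. \<Sum>c\<in>Basis. T (psi c) a k * T (fd c) (fd a) (fd k))"
    by (simp only: pw2)
  also have "\<dots> = (\<Sum>k\<in>Basis. \<Sum>c\<in>Basis. \<Sum>a\<in>Basis. T (psi c) a k * T (fd c) (fd a) (fd k))"
    by (rule sum.cong[OF refl], rule sum.swap)
  also have "\<dots> = (\<Sum>c\<in>Basis. \<Sum>k\<in>Basis. \<Sum>a\<in>Basis. T (psi c) a k * T (fd c) (fd a) (fd k))"
    by (rule sum.swap)
  also have "\<dots> = (\<Sum>c\<in>Basis. \<Sum>a\<in>Basis. \<Sum>k\<in>Basis. T (psi c) a k * T (fd c) (fd a) (fd k))"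
    by (rule sum.cong[OF refl], rule sum.swap)
  also have "\<dots> = (\<Sum>c\<in>Basis. XX (psi c) (fd c))" by (simp add: XX_def)
  finally show ?thesis by simp
qed

lemma tr_psi: "trace psi = 0"
proof -
  have "lam * trace psi = (\<Sum>k\<in>Basis. ricci_tensor br G (psi k) (fd k))"
    by (simp add: ric_eq trace_G sum_distrib_left)
  also have "\<dots> = (\<Sum>k\<in>Basis. SS (psi k) (fd k) / 4 - (XX (psi k) (fd k) + XX (fd k) (psi k)) / 4)"
    by (simp add: ric_formula tr_L WW0)
  also have "\<dots> = ((\<Sum>k\<in>Basis. SS (psi k) (fd k)) - (\<Sum>k\<in>Basis. XX (psi k) (fd k))
       - (\<Sum>k\<in>Basis. XX (fd k) (psi k))) / 4"
    by (simp add: sum_divide_distrib[symmetric] sum_subtractf sum.distrib diff_divide_distrib add_divide_distrib)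
  also have "\<dots> = 0"
    using SS_contr contr_D[OF XX_bil psi_lin psi_sa] by simp
  finally show ?thesis using lam0 by simp
qed

end

context setting begin

lemma tr_skew_psi: "trace (\<lambda>x. lc y (psi x)) = 0"
proof -
  have lA: "linear (lc y)" by (rule lc_lin2)
  have bil: "bilinear (\<lambda>u v. G u (psi (lc y v)))"
    unfolding bilinear_def using linear_compose[OF lA psi_lin] linG1 linG2
    by (auto simp: o_def intro: linear_compose[OF _ linG2, unfolded o_def])
  have "trace (lc y \<circ> psi) = (\<Sum>b\<in>Basis. G (lc y (psi b)) (fd b))" unfolding trace_G by simp
  also have "\<dots> = - (\<Sum>b\<in>Basis. G b (psi (lc y (fd b))))"
    by (simp only: lc_skew psi_sa sum_negf)
  also have "(\<Sum>b\<in>Basis. G b (psi (lc y (fd b)))) = (\<Sum>b\<in>Basis. G (fd b) (psi (lc y b)))"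
    using swap_bil[OF bil] by simp
  also have "\<dots> = trace (psi \<circ> lc y)" unfolding trace_G by (simp only: Gsym[of "fd _"] o_def)
  also have "\<dots> = trace (lc y \<circ> psi)" by (rule trace_cyclic0[OF psi_lin lA])
  finally show ?thesis by (simp add: o_def)
qed

lemma tr_psi_ad: "trace (\<lambda>x. br (psi x) z) = 0"
proof (rule flag)
  show "linear (\<lambda>x. br (psi x) z)" using linear_compose[OF psi_lin linbr1] by (simp add: o_def)
  show "x \<in> V k \<Longrightarrow> br (psi x) z \<in> V (Suc k)" for k x by (intro V_ad' V_psi)
qed

lemma tr_lc_psi: "trace (\<lambda>x. lc (psi x) z) = 0"
proof -
  have "(\<lambda>x. lc (psi x) z) = (\<lambda>x. lc z (psi x) + br (psi x) z)"
    by (rule ext) (metis lc_torsion diff_add_cancel add.commute)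
  then show ?thesis by (simp add: trace_add tr_skew_psi tr_psi_ad)
qed

lemma tr_psi_br: "trace (\<lambda>x. psi (br x y)) = 0"
proof (rule flag)
  show "linear (\<lambda>x. psi (br x y))" using linear_compose[OF linbr1 psi_lin] by (simp add: o_def)
  show "x \<in> V k \<Longrightarrow> psi (br x y) \<in> V (Suc k)" for k x by (intro V_ad' V_psi)
qed

lemma psi_sym: "G (psi a) b = G (psi b) a" using psi_sa[of a b] Gsym[of a "psi b"] by simp

end


locale ext = setting br G psi lam for br :: "'a::euclidean_space \<Rightarrow> 'a \<Rightarrow> 'a" and G psi lam +
  assumes trpp: "trace (psi \<circ> psi) \<noteq> 0"
begin

definition "cc = trace (psi \<circ> psi) / lam"
abbreviation "brt \<equiv> sd_bracket br psi"
abbreviation "Gt \<equiv> sd_metric G cc"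
abbreviation "lct \<equiv> levi_civita brt Gt"

lemma c0: "cc \<noteq> 0" using trpp lam0 by (simp add: cc_def)

lemmas psi_simps[simp] = linear_add[OF psi_lin] linear_scale[OF psi_lin] linear_0[OF psi_lin]
  linear_neg[OF psi_lin] linear_diff[OF psi_lin]

lemma brt_simp[simp]: "brt (x, s) (y, t) = (br x y + s *\<^sub>R psi y - t *\<^sub>R psi x, 0)"
  by (simp add: sd_bracket_def)
lemma Gt_simp[simp]: "Gt (x, s) (y, t) = G x y - cc * s * t"
  by (simp add: sd_metric_def)

lemma brt_bil: "bilinear brt"
  unfolding bilinear_def
  by (auto intro!: linearI simp: sd_bracket_def algebra_simps)

lemma lie_t: "lie_algebra brt"
  unfolding lie_algebra_def
proof (intro conjI allI)
  show "bilinear brt" by (rule brt_bil)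
  fix p show "brt p p = 0" by (cases p) (simp add: zero_prod_def)
next
  fix p q r :: "'a \<times> real"
  obtain x s where p: "p = (x, s)" by (cases p)
  obtain y t where q: "q = (y, t)" by (cases q)
  obtain z u where r: "r = (z, u)" by (cases r)
  show "brt p (brt q r) + brt q (brt r p) + brt r (brt p q) = 0"
    using jacobi[of x y z]
    by (simp add: p q r zero_prod_def psi_der br_anti[of x "psi z"] br_anti[of y "psi x"]
        br_anti[of z "psi y"] algebra_simps)
qed

lemma Gt_bil: "bilinear Gt"
  unfolding bilinear_def
  by (auto intro!: linearI simp: sd_metric_def algebra_simps)

lemma metric_t: "metric Gt"
  unfolding metric_def
proof (intro conjI allI impI)
  show "bilinear Gt" by (rule Gt_bil)
  fix p q show "Gt p q = Gt q p" by (simp add: sd_metric_def Gsym)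
next
  fix p assume h: "\<forall>q. Gt p q = 0"
  obtain x s where p: "p = (x, s)" by (cases p)
  have "G x b = 0" for b using h[rule_format, of "(b, 0)"] by (simp add: p)
  then have "x = 0" by (rule Gnd)
  moreover have "cc * s = 0" using h[rule_format, of "(0, 1)"] by (simp add: p)
  ultimately show "p = 0" using c0 by (simp add: p zero_prod_def)
qed

lemma Gt_eqI: assumes "\<And>Z. Gt u Z = Gt v Z" shows "u = v"
proof -
  have "Gt (u - v) Z = 0" for Z using assms[of Z] bilinear_lsub[OF Gt_bil] by simp
  then show ?thesis using metric_t unfolding metric_def by (metis eq_iff_diff_eq_0)
qed

lemma lct_prop: "2 * Gt (lc x y - t *\<^sub>R psi x, - G (psi x) y / cc) Z
   = Gt (brt (x, s) (y, t)) Z - Gt (brt (y, t) Z) (x, s) + Gt (brt Z (x, s)) (y, t)"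
proof -
  obtain z u where Z: "Z = (z, u)" by (cases Z)
  have k: "2 * G (lc x y) z = G (br x y) z - G (br y z) x + G (br z x) y"
    by (simp add: lc_char K_def T_def)
  show ?thesis
    using k c0 by (simp add: Z algebra_simps psi_sym[of z x] psi_sym[of y x] psi_sym[of z y])
qed

lemma lct_eq: "lct (x, s) (y, t) = (lc x y - t *\<^sub>R psi x, - G (psi x) y / cc)"
  unfolding levi_civita_def[of brt Gt]
proof (rule the_equality)
  show "\<forall>Z. 2 * Gt (lc x y - t *\<^sub>R psi x, - G (psi x) y / cc) Z = Gt (brt (x, s) (y, t)) Z - Gt (brt (y, t) Z) (x, s) + Gt (brt Z (x, s)) (y, t)"
    using lct_prop by blast
  fix W assume "\<forall>Z. 2 * Gt W Z = Gt (brt (x, s) (y, t)) Z - Gt (brt (y, t) Z) (x, s) + Gt (brt Z (x, s)) (y, t)"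
  with lct_prop show "W = (lc x y - t *\<^sub>R psi x, - G (psi x) y / cc)"
    by (intro Gt_eqI) (metis mult_cancel_left zero_neq_numeral)
qed

end


lemma trace_prod: fixes F :: "'a::euclidean_space \<times> real \<Rightarrow> 'a \<times> real"
  shows "trace F = trace (\<lambda>x. fst (F (x, 0))) + snd (F (0, 1))"
proof -
  have "inj_on (\<lambda>u. (u::'a, 0::real)) Basis" "inj_on (\<lambda>u. (0::'a, u::real)) Basis"
    by (auto intro!: inj_onI)
  then have "(\<Sum>b\<in>Basis. F b \<bullet> b) = (\<Sum>i\<in>Basis. F (i, 0) \<bullet> (i, 0)) + (\<Sum>i\<in>Basis. F (0, i) \<bullet> (0, i))"
    unfolding Basis_prod_def by (subst sum.union_disjoint) (auto simp: Basis_prod_def sum.reindex)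
  then show ?thesis unfolding trace_def by (simp add: inner_Pair_0 Basis_real_def)
qed

context mla begin
lemma lc_diff1: "lc (a - b) y = lc a y - lc b y" using linear_diff[OF lc_lin1] by simp
lemma lc_add1: "lc (a + b) y = lc a y + lc b y" using linear_add[OF lc_lin1] by simp
lemma lc_scale1: "lc (r *\<^sub>R a) y = r *\<^sub>R lc a y" using linear_scale[OF lc_lin1] by simp
lemma lc_zero1: "lc 0 y = 0" using linear_0[OF lc_lin1] by simp
lemma lc_diff2: "lc x (a - b) = lc x a - lc x b" using linear_diff[OF lc_lin2] by simp
lemma lc_add2: "lc x (a + b) = lc x a + lc x b" using linear_add[OF lc_lin2] by simp
lemma lc_scale2: "lc x (r *\<^sub>R a) = r *\<^sub>R lc x a" using linear_scale[OF lc_lin2] by simp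
lemma lc_zero2: "lc x 0 = 0" using linear_0[OF lc_lin2] by simp
lemmas lc_simps = lc_diff1 lc_add1 lc_scale1 lc_zero1 lc_diff2 lc_add2 lc_scale2 lc_zero2
end

context ext begin

lemma curv_fst: "fst (curvature brt Gt (x, 0) (y, t) (z, u)) =
   curvature br G x y z - u *\<^sub>R lc x (psi y) + (G (psi y) z / cc) *\<^sub>R psi x + u *\<^sub>R lc y (psi x)
   - (G (psi x) z / cc) *\<^sub>R psi y + t *\<^sub>R lc (psi x) z + u *\<^sub>R psi (br x y) - (t * u) *\<^sub>R psi (psi x)"
  unfolding curvature_def[of brt Gt] curvature_def[of br G]
  by (simp add: lct_eq lc_simps algebra_simps)

lemma curv_snd: "snd (curvature brt Gt (0, 1) (y, t) (z, u)) = G (psi (psi y)) z / cc"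
  unfolding curvature_def[of brt Gt]
  by (simp add: lct_eq lc_simps algebra_simps)

lemma ric_t: "ricci_tensor brt Gt (y, t) (z, u) = lam * G y z - t * u * trace (psi \<circ> psi)"
proof -
  have r1: "trace (\<lambda>x. (G (psi x) z / cc) *\<^sub>R psi y) = G (psi (psi y)) z / cc"
  proof (rule trace_rank1[of "\<lambda>x. G (psi x) z / cc", simplified])
    show "linear (\<lambda>x. G (psi x) z / cc)"
      by (rule linearI) (simp_all add: add_divide_distrib)
  qed
  have e: "(\<lambda>x. fst (curvature brt Gt (x, 0) (y, t) (z, u))) = (\<lambda>x.
   curvature br G x y z - u *\<^sub>R lc x (psi y) + (G (psi y) z / cc) *\<^sub>R psi x + u *\<^sub>R lc y (psi x)
   - (G (psi x) z / cc) *\<^sub>R psi y + t *\<^sub>R lc (psi x) z + u *\<^sub>R psi (br x y) - (t * u) *\<^sub>R psi (psi x))"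
    by (rule ext) (rule curv_fst)
  have "ricci_tensor brt Gt (y, t) (z, u) = trace (\<lambda>x. fst (curvature brt Gt (x, 0) (y, t) (z, u)))
     + G (psi (psi y)) z / cc"
    unfolding ricci_tensor_def[of brt Gt] by (subst trace_prod) (simp add: curv_snd)
  also have "trace (\<lambda>x. fst (curvature brt Gt (x, 0) (y, t) (z, u))) =
      ricci_tensor br G y z - u * trace (\<lambda>x. lc x (psi y)) + (G (psi y) z / cc) * trace psi
      + u * trace (\<lambda>x. lc y (psi x)) - G (psi (psi y)) z / cc + t * trace (\<lambda>x. lc (psi x) z)
      + u * trace (\<lambda>x. psi (br x y)) - (t * u) * trace (\<lambda>x. psi (psi x))"
    unfolding e by (simp only: trace_add trace_diff trace_scale r1 ricci_tensor_def)
  finally show ?thesis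
    by (simp add: ric_eq tr_L tr_psi tr_skew_psi tr_lc_psi tr_psi_br o_def)
qed

lemma cc_lam: "cc * lam = trace (psi \<circ> psi)" using lam0 by (simp add: cc_def)

lemma ricop_t: "ricci_op brt Gt = (\<lambda>X. lam *\<^sub>R X)"
  unfolding ricci_op_def[of brt Gt]
proof (rule the_equality)
  show P: "\<forall>X Y. Gt (lam *\<^sub>R X) Y = ricci_tensor brt Gt X Y"
  proof (intro allI)
    fix X Y :: "'a \<times> real"
    obtain y t where X: "X = (y, t)" by (cases X)
    obtain z u where Y: "Y = (z, u)" by (cases Y)
    show "Gt (lam *\<^sub>R X) Y = ricci_tensor brt Gt X Y"
      using cc_lam by (simp add: X Y ric_t algebra_simps)
  qed
  fix R assume h: "\<forall>X Y. Gt (R X) Y = ricci_tensor brt Gt X Y"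
  show "R = (\<lambda>X. lam *\<^sub>R X)"
  proof (intro ext Gt_eqI)
    fix X Z show "Gt (R X) Z = Gt (lam *\<^sub>R X) Z" using h P by metis
  qed
qed

end

context ext begin

lemma span_e0: "span {e0} = {(0, k) | k. True}"
  by (auto simp: span_singleton e0_def)

lemma lcs_t: "lcs brt {p. snd p = 0} k = (\<lambda>v. (v, 0::real)) ` V k"
proof (induction k)
  case 0
  show ?case by (auto simp: image_iff)
next
  case (Suc k)
  have lin: "linear (\<lambda>v. (v, 0::real))" by (rule linearI) simp_all
  have "{brt x y |x y. x \<in> {p. snd p = 0} \<and> y \<in> lcs brt {p. snd p = 0} k}
      = (\<lambda>v. (v, 0::real)) ` {br x y |x y. x \<in> UNIV \<and> y \<in> V k}"
  proof (rule set_eqI, rule iffI)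
    fix q assume "q \<in> {brt x y |x y. x \<in> {p. snd p = 0} \<and> y \<in> lcs brt {p. snd p = 0} k}"
    then obtain x y where q: "q = brt x y" and x: "snd x = 0" and y0: "y \<in> lcs brt {p. snd p = 0} k"
      by blast
    have y: "y \<in> (\<lambda>v. (v, 0::real)) ` V k" using y0 Suc.IH by simp
    obtain b where b: "b \<in> V k" "y = (b, 0)" using y by blast
    obtain a where a: "x = (a, 0)" using x by (metis prod.collapse)
    show "q \<in> (\<lambda>v. (v, 0::real)) ` {br x y |x y. x \<in> UNIV \<and> y \<in> V k}"
      using b by (auto simp: q a)
  next
    fix q assume "q \<in> (\<lambda>v. (v, 0::real)) ` {br x y |x y. x \<in> UNIV \<and> y \<in> V k}"
    then obtain a b where q: "q = (br a b, 0)" and b: "b \<in> V k" by blast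
    have "q = brt (a, 0) (b, 0)" by (simp add: q)
    moreover have "(b, 0) \<in> lcs brt {p. snd p = 0} k" using Suc.IH b by auto
    ultimately show "q \<in> {brt x y |x y. x \<in> {p. snd p = 0} \<and> y \<in> lcs brt {p. snd p = 0} k}"
      by fastforce
  qed
  then show ?case by (simp only: lcs.simps span_linear_image[OF lin])
qed

lemma iwa: "pseudo_iwasawa brt Gt {p. snd p = 0} (span {e0})"
  unfolding pseudo_iwasawa_def
proof (intro conjI ballI allI)
  show "subspace {p :: 'a \<times> real. snd p = 0}" by (simp add: subspace_def)
  show "subspace (span {e0 :: 'a \<times> real})" by (rule subspace_span)
  show "{p :: 'a \<times> real. snd p = 0} \<inter> span {e0} = {0}"
    by (auto simp: span_e0 zero_prod_def)
  show "{p :: 'a \<times> real. snd p = 0} + span {e0} = UNIV"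
  proof (rule set_eqI, rule iffI)
    fix p :: "'a \<times> real"
    have "p = (fst p, 0) + (0, snd p)" by simp
    moreover have "(fst p, 0) \<in> {p :: 'a \<times> real. snd p = 0}" by simp
    moreover have "(0, snd p) \<in> span {e0 :: 'a \<times> real}" by (auto simp: span_e0)
    ultimately show "p \<in> {p. snd p = 0} + span {e0}" by (metis set_plus_intro)
  qed simp
  fix n a assume "n \<in> {p :: 'a \<times> real. snd p = 0}" "a \<in> span {e0 :: 'a \<times> real}"
  then show "Gt n a = 0" by (auto simp: span_e0 sd_metric_def)
next
  fix x y :: "'a \<times> real" assume "y \<in> {p. snd p = 0}"
  then show "brt x y \<in> {p. snd p = 0}" by (simp add: sd_bracket_def)
next
  show "nilpotent_on brt {p :: 'a \<times> real. snd p = 0}"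
  proof -
    obtain m where "V m = {0}" by (rule nil_m)
    then have "lcs brt {p. snd p = 0} m = {0}" by (simp add: lcs_t zero_prod_def)
    then show ?thesis by (auto simp: nilpotent_on_def)
  qed
next
  fix a b :: "'a \<times> real" assume "a \<in> span {e0}" "b \<in> span {e0}"
  then show "brt a b = 0" by (auto simp: span_e0 zero_prod_def)
next
  fix a :: "'a \<times> real" assume "a \<in> span {e0}"
  then obtain k where a: "a = (0, k)" by (auto simp: span_e0)
  show "self_adjoint Gt (brt a)"
    unfolding self_adjoint_def
  proof (intro allI)
    fix p q :: "'a \<times> real"
    show "Gt (brt a p) q = Gt p (brt a q)"
      by (cases p, cases q) (simp add: a psi_sa)
  qed
qed

end

theorem corollary4p12:
  fixes br :: "'a::euclidean_space \<Rightarrow> 'a \<Rightarrow> 'a"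
    and G :: "'a \<Rightarrow> 'a \<Rightarrow> real"
    and psi :: "'a \<Rightarrow> 'a"
    and lam :: real
  assumes "lie_algebra br" and "nilpotent_lie br" and "metric G"
    and "ricci_op br G = (\<lambda>X. lam *\<^sub>R X)" and "lam \<noteq> 0"
    and "derivation br psi" and "self_adjoint G psi"
    and "trace (psi \<circ> psi) \<noteq> 0"
  shows "lie_algebra (sd_bracket br psi)
    \<and> metric (sd_metric G (trace (psi \<circ> psi) / lam))
    \<and> ricci_op (sd_bracket br psi) (sd_metric G (trace (psi \<circ> psi) / lam)) = (\<lambda>X. lam *\<^sub>R X)
    \<and> pseudo_iwasawa (sd_bracket br psi) (sd_metric G (trace (psi \<circ> psi) / lam))
        {p. snd p = 0} (span {e0})"
proof -
  interpret ext br G psi lam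
    by unfold_locales (use assms in auto)
  show ?thesis using lie_t metric_t ricop_t iwa by (simp add: cc_def)
qed


end
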